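(* Let $d=2$, $n\ge 2$, $\varepsilon=1/256$, and let $f$ be a stable update function. There exists $K>0$ (depending on $n$ and $f$) such that for every configuration $\mathcal U^{(0)}$ of $n$ opinions in $\mathbb S^1$ which is $\varepsilon$-inactive but active, there exists a sequence of at most $K$ interventions after which the resulting configuration is strictly convex.
   Context: Opinions are unit vectors in $\mathbb R^d$; a configuration is an $n$-tuple $(\vec u_1,\dots,\vec u_n)$ and $A_{ij}=\langle\vec u_i,\vec u_j\rangle$. An intervention $(i,j)$, $i\ne j$, replaces $\vec u_i$ by $\vec w/\|\vec w\|$ with $\vec w=\vec u_i+f(A_{ij})\vec u_j$, leaving others unchanged. $f:[-1,1]\to\mathbb R$ is stable if continuous and $\operatorname{sign}f(A)=\operatorname{sign}A$ for all $A$. For $0\le\varepsilon<1$, a configuration is $\varepsilon$-active if there exist $i,j$ with $\varepsilon<|A_{ij}|<1-\varepsilon$, and $\varepsilon$-inactive otherwise; "active" means $0$-active. Strictly convex: there exist $b_1,\dots,b_n\in\{\pm1\}$ with $\langle b_i\vec u_i,b_j\vec u_j\rangle>0$ for all $i,j$. *)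

theory Defs
  imports "HOL-Analysis.Analysis"
begin

text \<open>Opinions in the unit circle S^1 of R^2; a configuration of n opinions is a map
  from indices {0..<n} to vectors (values at indices \<ge> n are irrelevant).\<close>

type_synonym config = "nat \<Rightarrow> real ^ 2"

definition is_config :: "nat \<Rightarrow> config \<Rightarrow> bool" where
  "is_config n U \<longleftrightarrow> (\<forall>i<n. norm (U i) = 1)"

definition stable :: "(real \<Rightarrow> real) \<Rightarrow> bool" where
  "stable f \<longleftrightarrow> continuous_on {-1..1} f \<and> (\<forall>A\<in>{-1..1}. sgn (f A) = sgn A)"

definition intervene :: "(real \<Rightarrow> real) \<Rightarrow> config \<Rightarrow> nat \<times> nat \<Rightarrow> config" where
  "intervene f U ij = (let i = fst ij; j = snd ij;
      w = U i + f (U i \<bullet> U j) *\<^sub>R U j in U(i := w /\<^sub>R norm w))"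

definition valid_intervention :: "nat \<Rightarrow> nat \<times> nat \<Rightarrow> bool" where
  "valid_intervention n ij \<longleftrightarrow> fst ij < n \<and> snd ij < n \<and> fst ij \<noteq> snd ij"

definition apply_interventions :: "(real \<Rightarrow> real) \<Rightarrow> config \<Rightarrow> (nat \<times> nat) list \<Rightarrow> config" where
  "apply_interventions f U s = foldl (intervene f) U s"

definition eps_active :: "real \<Rightarrow> nat \<Rightarrow> config \<Rightarrow> bool" where
  "eps_active \<epsilon> n U \<longleftrightarrow>
     (\<exists>i<n. \<exists>j<n. \<epsilon> < \<bar>U i \<bullet> U j\<bar> \<and> \<bar>U i \<bullet> U j\<bar> < 1 - \<epsilon>)"

definition eps_inactive :: "real \<Rightarrow> nat \<Rightarrow> config \<Rightarrow> bool" where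
  "eps_inactive \<epsilon> n U \<longleftrightarrow> \<not> eps_active \<epsilon> n U"

definition active :: "nat \<Rightarrow> config \<Rightarrow> bool" where
  "active n U \<longleftrightarrow> eps_active 0 n U"

definition strictly_convex :: "nat \<Rightarrow> config \<Rightarrow> bool" where
  "strictly_convex n U \<longleftrightarrow> (\<exists>b :: nat \<Rightarrow> real. (\<forall>i<n. b i = 1 \<or> b i = -1) \<and>
     (\<forall>i<n. \<forall>j<n. (b i *\<^sub>R U i) \<bullet> (b j *\<^sub>R U j) > 0))"

end

theory Submission
  imports Defs
begin


lemma sq_le_abs: "\<bar>z::real\<bar> \<le> 1 \<Longrightarrow> z^2 \<le> \<bar>z\<bar>"
  by (metis abs_ge_zero abs_mult_self_eq mult_left_le power2_eq_square)

lemma abs_le_of_sq: "(z::real)^2 \<le> c^2 \<Longrightarrow> c \<ge> 0 \<Longrightarrow> \<bar>z\<bar> \<le> c"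
  by (metis abs_le_square_iff abs_of_nonneg)

lemma within_real:
  fixes x y b d :: real
  assumes "x \<ge> 0" "y \<ge> 0" "x^2 + b^2 = 1" "y^2 + d^2 = 1" "b^2 \<le> 1/16" "d^2 \<le> 1/16"
  shows "x*y + b*d > 0"
proof -
  have x1: "\<bar>x\<bar> \<le> 1" using assms abs_le_of_sq[of x 1] by (simp add: power2_eq_square) (smt (verit) zero_le_square)
  have y1: "\<bar>y\<bar> \<le> 1" using assms abs_le_of_sq[of y 1] by (simp add: power2_eq_square) (smt (verit) zero_le_square)
  have "x \<ge> 15/16" using sq_le_abs[OF x1] assms by simp
  moreover have "y \<ge> 15/16" using sq_le_abs[OF y1] assms by simp
  ultimately have "x*y \<ge> (15/16)*(15/16)" by (intro mult_mono) auto
  moreover have "\<bar>b\<bar> \<le> 1/4" using abs_le_of_sq[of b "1/4"] assms by (simp add: power_divide)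
  moreover have "\<bar>d\<bar> \<le> 1/4" using abs_le_of_sq[of d "1/4"] assms by (simp add: power_divide)
  ultimately have "\<bar>b\<bar>*\<bar>d\<bar> \<le> (1/4)*(1/4)" "x*y \<ge> 225/256"
    using mult_mono[of "\<bar>b\<bar>" "1/4" "\<bar>d\<bar>" "1/4"] by auto
  moreover have "- \<bar>b*d\<bar> \<le> b*d" by simp
  ultimately show ?thesis by (simp add: abs_mult)
qed

lemma cross_real:
  fixes x y b d g D :: real
  assumes "x \<ge> 0" "y \<ge> 0" "x^2 + b^2 = 1" "y^2 + d^2 = 1" "0 < g" "g^2 + D^2 = 1"
    "b^2 \<le> g^2/16" "d^2 \<le> g^2/16"
  shows "x*y*g - x*d*D + b*y*D + b*d*g > 0"
proof -
  have g1: "g \<le> 1" using assms abs_le_of_sq[of g 1] by (smt (verit) one_power2 zero_le_power2)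
  have D1: "\<bar>D\<bar> \<le> 1" using assms abs_le_of_sq[of D 1] by (smt (verit) one_power2 zero_le_power2)
  have x1: "\<bar>x\<bar> \<le> 1" using assms abs_le_of_sq[of x 1] by (smt (verit) one_power2 zero_le_power2)
  have y1: "\<bar>y\<bar> \<le> 1" using assms abs_le_of_sq[of y 1] by (smt (verit) one_power2 zero_le_power2)
  have gg: "g^2/16 \<le> 1/16" using g1 assms by (simp add: power_le_one)
  have "x \<ge> 15/16" using sq_le_abs[OF x1] assms gg by simp
  moreover have "y \<ge> 15/16" using sq_le_abs[OF y1] assms gg by simp
  ultimately have xy: "x*y \<ge> 225/256" using mult_mono[of "15/16" x "15/16" y] by simp
  have bb: "\<bar>b\<bar> \<le> g/4" using abs_le_of_sq[of b "g/4"] assms by (simp add: power_divide)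
  have dd: "\<bar>d\<bar> \<le> g/4" using abs_le_of_sq[of d "g/4"] assms by (simp add: power_divide)
  have t1: "x*y*g \<ge> 225/256*g" using xy assms by simp
  have t2: "\<bar>x*d*D\<bar> \<le> g/4"
  proof -
    have "\<bar>x*d*D\<bar> = \<bar>x\<bar>*\<bar>d\<bar>*\<bar>D\<bar>" by (simp add: abs_mult)
    also have "\<dots> \<le> 1*(g/4)*1" using x1 dd D1 by (intro mult_mono) auto
    finally show ?thesis by simp
  qed
  have t3: "\<bar>b*y*D\<bar> \<le> g/4"
  proof -
    have "\<bar>b*y*D\<bar> = \<bar>b\<bar>*\<bar>y\<bar>*\<bar>D\<bar>" by (simp add: abs_mult)
    also have "\<dots> \<le> (g/4)*1*1" using y1 bb D1 by (intro mult_mono) auto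
    finally show ?thesis by simp
  qed
  have t4: "\<bar>b*d*g\<bar> \<le> g/16"
  proof -
    have "\<bar>b*d*g\<bar> = \<bar>b\<bar>*\<bar>d\<bar>*\<bar>g\<bar>" by (simp add: abs_mult)
    also have "\<dots> \<le> (g/4)*(g/4)*1" using g1 bb dd assms by (intro mult_mono) auto
    also have "\<dots> \<le> (1/4)*(g/4)*1" using g1 assms by (intro mult_mono) auto
    finally show ?thesis by simp
  qed
  show ?thesis using t1 t2 t3 t4 assms by linarith
qed

lemma clusterA_real:
  fixes a b d e :: real
  assumes "a^2 + d^2 = 1" "b^2 + e^2 = 1" "\<bar>a\<bar> \<ge> 255/256" "\<bar>b\<bar> \<ge> 255/256"
  shows "\<bar>a*b + d*e\<bar> \<ge> 1/2"
proof -
  have "a^2 \<ge> (255/256)^2" using assms abs_le_square_iff[of "255/256" a] by simp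
  moreover have "b^2 \<ge> (255/256)^2" using assms abs_le_square_iff[of "255/256" b] by simp
  ultimately have "d^2 \<le> 1/64" "e^2 \<le> 1/64" using assms by (simp_all add: power_divide)
  hence "\<bar>d\<bar> \<le> 1/8" "\<bar>e\<bar> \<le> 1/8" using abs_le_of_sq[of d "1/8"] abs_le_of_sq[of e "1/8"] by (simp_all add: power_divide)
  hence "\<bar>d*e\<bar> \<le> 1/64" by (simp add: abs_mult mult_mono[of "\<bar>d\<bar>" "1/8" "\<bar>e\<bar>" "1/8", simplified] order_trans)
  moreover have "\<bar>a\<bar>*\<bar>b\<bar> \<ge> (255/256)*(255/256)" using assms mult_mono[of "255/256" "\<bar>a\<bar>" "255/256" "\<bar>b\<bar>"] by simp
  hence "\<bar>a*b\<bar> \<ge> (255/256)*(255/256)" by (simp add: abs_mult)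
  ultimately show ?thesis by linarith
qed

lemma clusterB_real:
  fixes a b d e :: real
  assumes "a^2 + d^2 = 1" "b^2 + e^2 = 1" "\<bar>a\<bar> \<le> 1/256" "\<bar>b\<bar> \<le> 1/256"
  shows "\<bar>a*b + d*e\<bar> \<ge> 1/2"
proof -
  have "a^2 \<le> (1/256)^2" using assms abs_le_square_iff[of a "1/256"] by simp
  moreover have "b^2 \<le> (1/256)^2" using assms abs_le_square_iff[of b "1/256"] by simp
  ultimately have "d^2 \<ge> 3/4" "e^2 \<ge> 3/4" using assms by (simp_all add: power_divide)
  hence "(d*e)^2 \<ge> 9/16" using mult_mono[of "3/4" "d^2" "3/4" "e^2"] by (simp add: power_mult_distrib)
  hence "\<bar>d*e\<bar> \<ge> 3/4" using abs_le_square_iff[of "3/4" "d*e"] by (simp add: power_divide)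
  moreover have "\<bar>a\<bar>*\<bar>b\<bar> \<le> (1/256)*(1/256)" using assms mult_mono[of "\<bar>a\<bar>" "1/256" "\<bar>b\<bar>" "1/256"] by simp
  hence "\<bar>a*b\<bar> \<le> (1/256)*(1/256)" by (simp add: abs_mult)
  ultimately show ?thesis by linarith
qed



lemma inner2: "(x::real^2) \<bullet> y = x$1*y$1 + x$2*y$2"
  by (simp add: inner_vec_def sum_2)

definition det2 :: "real^2 \<Rightarrow> real^2 \<Rightarrow> real" where
  "det2 x y = x$1*y$2 - x$2*y$1"

lemma lagrange: "x\<bullet>x = 1 \<Longrightarrow> t\<bullet>t = 1 \<Longrightarrow> (x\<bullet>t)^2 + (det2 t x)^2 = 1"
  unfolding inner2 det2_def by algebra

lemma det_scale: "det2 (a *\<^sub>R x) y = a * det2 x y" "det2 x (a *\<^sub>R y) = a * det2 x y"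
  by (simp_all add: det2_def algebra_simps)
lemma det_add: "det2 t (x + y) = det2 t x + det2 t y" by (simp add: det2_def algebra_simps)
lemma det_self: "det2 t t = 0" by (simp add: det2_def)

definition mv :: "(real\<Rightarrow>real) \<Rightarrow> real^2 \<Rightarrow> real^2 \<Rightarrow> real^2" where
  "mv f t v = (let w = v + f (v\<bullet>t) *\<^sub>R t in w /\<^sub>R norm w)"

lemma intervene_pair: "intervene f U (i,j) = U(i := mv f (U j) (U i))"
  by (simp add: intervene_def mv_def Let_def)

lemma fold_rep: "i \<noteq> j \<Longrightarrow> foldl (intervene f) U (replicate k (i,j)) = U(i := (mv f (U j) ^^ k) (U i))"
proof (induction k arbitrary: U)
  case 0 then show ?case by simp
next
  case (Suc k)
  have "foldl (intervene f) U (replicate (Suc k) (i,j)) = foldl (intervene f) (U(i := mv f (U j) (U i))) (replicate k (i,j))"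
    by (simp add: intervene_pair)
  also have "\<dots> = U(i := (mv f (U j) ^^ k) (mv f (U j) (U i)))"
    using Suc by (auto simp: fun_eq_iff)
  also have "\<dots> = U(i := (mv f (U j) ^^ Suc k) (U i))"
    by (simp add: funpow_Suc_right del: funpow.simps)
  finally show ?case .
qed

lemma mv_step:
  assumes "v\<bullet>v = 1" "t\<bullet>t = 1" "f (v\<bullet>t) * (v\<bullet>t) \<ge> 0"
  shows "mv f t v \<bullet> mv f t v = 1" "(det2 t (mv f t v))^2 * (1 + (f (v\<bullet>t))^2) \<le> (det2 t v)^2"
proof -
  define c where "c = f (v\<bullet>t)"
  define w where "w = v + c *\<^sub>R t"
  have ww: "w\<bullet>w = 1 + 2*c*(v\<bullet>t) + c^2"
    using assms unfolding w_def by (simp add: inner_add inner_commute power2_eq_square algebra_simps)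
  have cv: "c*(v\<bullet>t) \<ge> 0" using assms(3) c_def by simp
  have wpos: "w\<bullet>w \<ge> 1 + c^2" using ww cv by linarith
  have nw: "norm w ^2 = w\<bullet>w" by (simp add: power2_norm_eq_inner)
  have "w \<noteq> 0" using wpos by (auto simp: add_pos_nonneg) (smt (verit) zero_le_power2)
  hence nwpos: "norm w > 0" by simp
  have mvw: "mv f t v = (1/norm w) *\<^sub>R w" by (simp add: mv_def w_def c_def Let_def inverse_eq_divide)
  show "mv f t v \<bullet> mv f t v = 1" using nw nwpos unfolding mvw
    by (simp add: power2_eq_square field_simps)
  have dw: "det2 t w = det2 t v" unfolding w_def by (simp add: det_add det_scale det_self)
  have "(det2 t (mv f t v))^2 = (det2 t v)^2 / (w\<bullet>w)"
    unfolding mvw det_scale dw using nw by (simp add: power_divide power_mult_distrib)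
  moreover have "(det2 t v)^2 / (w\<bullet>w) * (1 + c^2) \<le> (det2 t v)^2"
  proof -
    have "(det2 t v)^2 / (w\<bullet>w) * (1 + c^2) = (det2 t v)^2 * ((1 + c^2) / (w\<bullet>w))" by simp
    also have "\<dots> \<le> (det2 t v)^2 * 1"
      using wpos by (intro mult_left_mono) (auto simp: divide_le_eq_1)
    finally show ?thesis by simp
  qed
  ultimately show "(det2 t (mv f t v))^2 * (1 + (f (v\<bullet>t))^2) \<le> (det2 t v)^2" by (simp add: c_def)
qed

lemma mv_iter:
  assumes fs: "\<And>a. \<bar>a\<bar> \<le> 1 \<Longrightarrow> f a * a \<ge> 0"
    and fm: "\<And>a. 1/2 \<le> \<bar>a\<bar> \<Longrightarrow> \<bar>a\<bar> \<le> 1 \<Longrightarrow> \<bar>f a\<bar> \<ge> cm"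
    and cm: "cm > 0" and v: "v\<bullet>v = 1" and t: "t\<bullet>t = 1" and vt: "\<bar>v\<bullet>t\<bar> \<ge> 1/2"
  shows "(mv f t ^^ m) v \<bullet> (mv f t ^^ m) v = 1 \<and>
         (det2 t ((mv f t ^^ m) v))^2 \<le> (1/(1+cm^2))^m * (det2 t v)^2"
proof (induction m)
  case 0 then show ?case using v by simp
next
  case (Suc m)
  define V where "V = (mv f t ^^ m) v"
  have VV: "V\<bullet>V = 1" and Vd: "(det2 t V)^2 \<le> (1/(1+cm^2))^m * (det2 t v)^2"
    using Suc V_def by auto
  have b1: "1/(1+cm^2) \<le> 1" "0 \<le> 1/(1+cm^2)" by (auto simp: add_pos_nonneg)
  have le1: "(1/(1+cm^2))^m \<le> 1" using power_le_one[OF b1(2) b1(1)] .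
  have dv0: "(det2 t v)^2 \<ge> 0" by simp
  have "(det2 t V)^2 \<le> (det2 t v)^2" using Vd le1 dv0 using mult_right_mono[OF le1 dv0] by linarith
  hence "(V\<bullet>t)^2 \<ge> (v\<bullet>t)^2" using lagrange[OF VV t] lagrange[OF v t] by linarith
  moreover have "(1/2)^2 \<le> (v\<bullet>t)^2" using vt abs_le_square_iff[of "1/2" "v\<bullet>t"] by simp
  ultimately have "(1/2)^2 \<le> (V\<bullet>t)^2" by linarith
  hence a1: "\<bar>V\<bullet>t\<bar> \<ge> 1/2" using abs_le_square_iff[of "1/2" "V\<bullet>t"] by simp
  have a2: "\<bar>V\<bullet>t\<bar> \<le> 1"
    by (metis VV t Cauchy_Schwarz_ineq2 norm_eq_sqrt_inner real_sqrt_one mult_1)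
  have c1: "\<bar>f (V\<bullet>t)\<bar> \<ge> cm" using fm a1 a2 by blast
  hence c2: "(f (V\<bullet>t))^2 \<ge> cm^2" using cm by (metis abs_le_square_iff abs_of_pos)
  have st: "mv f t V \<bullet> mv f t V = 1" "(det2 t (mv f t V))^2 * (1 + (f (V\<bullet>t))^2) \<le> (det2 t V)^2"
    using mv_step[of V t f] VV t fs[OF a2] by auto
  have "(det2 t (mv f t V))^2 * (1 + cm^2) \<le> (det2 t (mv f t V))^2 * (1 + (f (V\<bullet>t))^2)"
    using c2 by (intro mult_left_mono) auto
  with st(2) have "(det2 t (mv f t V))^2 * (1 + cm^2) \<le> (det2 t V)^2" by linarith
  hence "(det2 t (mv f t V))^2 \<le> (det2 t V)/(1+cm^2) * det2 t V"
    by (simp add: field_simps power2_eq_square add_pos_nonneg)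
  hence "(det2 t (mv f t V))^2 \<le> (1/(1+cm^2)) * (det2 t V)^2"
    by (simp add: power2_eq_square)
  also have "\<dots> \<le> (1/(1+cm^2)) * ((1/(1+cm^2))^m * (det2 t v)^2)"
    using Vd by (intro mult_left_mono) (auto simp: add_pos_nonneg)
  finally show ?case using st(1) by (simp add: V_def mult.assoc)
qed

lemma decomp: "t\<bullet>t = 1 \<Longrightarrow> x\<bullet>y = (x\<bullet>t)*(y\<bullet>t) + det2 t x * det2 t y"
  unfolding inner2 det2_def by algebra

lemma det_tri_id: "q\<bullet>q = 1 \<Longrightarrow> det2 x z = (x\<bullet>q)*det2 q z - det2 q x * (q\<bullet>z)"
  unfolding inner2 det2_def by algebra

lemma cross_ident: "P\<bullet>P = 1 \<Longrightarrow> Q\<bullet>Q = 1 \<Longrightarrow> X\<bullet>Y = (X\<bullet>P)*(Y\<bullet>Q)*(P\<bullet>Q)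
   - (X\<bullet>P)*det2 Q Y*det2 P Q + det2 P X*(Y\<bullet>Q)*det2 P Q + det2 P X * det2 Q Y*(P\<bullet>Q)"
  unfolding inner2 det2_def by algebra

lemma unit_inner_le: "(x::real^2)\<bullet>x = 1 \<Longrightarrow> y\<bullet>y = 1 \<Longrightarrow> \<bar>x\<bullet>y\<bar> \<le> 1"
  by (metis Cauchy_Schwarz_ineq2 norm_eq_sqrt_inner real_sqrt_one mult_1)

lemma unit_det_le: "(x::real^2)\<bullet>x = 1 \<Longrightarrow> y\<bullet>y = 1 \<Longrightarrow> \<bar>det2 x y\<bar> \<le> 1"
  by (metis abs_le_square_iff abs_one le_add_same_cancel2 lagrange power_one zero_le_power2)

lemma within_vec:
  assumes "t\<bullet>t = 1" "X\<bullet>X = 1" "Y\<bullet>Y = 1" "X\<bullet>t \<ge> 0" "Y\<bullet>t \<ge> 0"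
    "(det2 t X)^2 \<le> 1/16" "(det2 t Y)^2 \<le> 1/16"
  shows "X\<bullet>Y > 0"
  using within_real[of "X\<bullet>t" "Y\<bullet>t" "det2 t X" "det2 t Y"] decomp[OF assms(1), of X Y]
    lagrange[OF assms(2,1)] lagrange[OF assms(3,1)] assms by simp

lemma cross_vec:
  assumes "P\<bullet>P = 1" "Q\<bullet>Q = 1" "X\<bullet>X = 1" "Y\<bullet>Y = 1" "X\<bullet>P \<ge> 0" "Y\<bullet>Q \<ge> 0"
    "P\<bullet>Q > 0" "(det2 P X)^2 \<le> (P\<bullet>Q)^2/16" "(det2 Q Y)^2 \<le> (P\<bullet>Q)^2/16"
  shows "X\<bullet>Y > 0"
proof -
  have "(Q\<bullet>P)^2 + (det2 P Q)^2 = 1" using lagrange[OF assms(2,1)] .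
  hence gD: "(P\<bullet>Q)^2 + (det2 P Q)^2 = 1" by (simp add: inner_commute)
  show ?thesis
    using cross_real[of "X\<bullet>P" "Y\<bullet>Q" "det2 P X" "det2 Q Y" "P\<bullet>Q" "det2 P Q"]
      cross_ident[OF assms(1,2), of X Y] lagrange[OF assms(3,1)] lagrange[OF assms(4,2)] gD assms
    by simp
qed

lemma sgn_sq: "(x::real) \<noteq> 0 \<Longrightarrow> sgn x * sgn x = 1" by (cases "x > 0") auto
lemma sgn_mul: "sgn (x::real) * x = \<bar>x\<bar>" by (cases "x > 0") (auto simp: sgn_if)

lemma signed:
  assumes "vv\<bullet>vv = 1" "tt\<bullet>tt = 1" "sg * sg = 1" "vv\<bullet>tt \<noteq> 0"
  shows "((sg * sgn (vv\<bullet>tt)) *\<^sub>R vv)\<bullet>((sg * sgn (vv\<bullet>tt)) *\<^sub>R vv) = 1"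
    "((sg * sgn (vv\<bullet>tt)) *\<^sub>R vv)\<bullet>(sg *\<^sub>R tt) \<ge> 0"
    "(det2 (sg *\<^sub>R tt) ((sg * sgn (vv\<bullet>tt)) *\<^sub>R vv))^2 = (det2 tt vv)^2"
    "(sg *\<^sub>R tt)\<bullet>(sg *\<^sub>R tt) = 1"
proof -
  have q: "sgn (vv\<bullet>tt) * sgn (vv\<bullet>tt) = 1" using sgn_sq assms(4) .
  show "((sg * sgn (vv\<bullet>tt)) *\<^sub>R vv)\<bullet>((sg * sgn (vv\<bullet>tt)) *\<^sub>R vv) = 1"
  proof -
    have "((sg * sgn (vv\<bullet>tt)) *\<^sub>R vv)\<bullet>((sg * sgn (vv\<bullet>tt)) *\<^sub>R vv) = (sg * sg)*(sgn (vv\<bullet>tt) * sgn (vv\<bullet>tt))*(vv\<bullet>vv)"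
      by (simp add: algebra_simps)
    thus ?thesis using assms q by simp
  qed
  have "((sg * sgn (vv\<bullet>tt)) *\<^sub>R vv)\<bullet>(sg *\<^sub>R tt) = (sg * sg) * (sgn (vv\<bullet>tt) * (vv\<bullet>tt))"
    by (simp add: algebra_simps)
  also have "\<dots> = \<bar>vv\<bullet>tt\<bar>" using assms sgn_mul by simp
  finally show "((sg * sgn (vv\<bullet>tt)) *\<^sub>R vv)\<bullet>(sg *\<^sub>R tt) \<ge> 0" by simp
  have "det2 (sg *\<^sub>R tt) ((sg * sgn (vv\<bullet>tt)) *\<^sub>R vv) = (sg * sg) * sgn (vv\<bullet>tt) * det2 tt vv"
    by (simp add: det_scale algebra_simps)
  thus "(det2 (sg *\<^sub>R tt) ((sg * sgn (vv\<bullet>tt)) *\<^sub>R vv))^2 = (det2 tt vv)^2"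
    using assms q by (simp add: power2_eq_square algebra_simps)
  show "(sg *\<^sub>R tt)\<bullet>(sg *\<^sub>R tt) = 1" using assms by simp
qed

lemma len_concat_le: "(\<And>i. length (blk i) \<le> k) \<Longrightarrow> length (concat (map blk xs)) \<le> length xs * k"
  by (induction xs) (auto simp: add_mono)



lemma det_small: "x\<bullet>x = 1 \<Longrightarrow> t\<bullet>t = 1 \<Longrightarrow> c \<le> \<bar>x\<bullet>t\<bar> \<Longrightarrow> c \<ge> 0 \<Longrightarrow> (det2 t x)^2 \<le> 1 - c^2"
  using lagrange[of x t] abs_le_square_iff[of c "x\<bullet>t"] by simp

lemma perp_both: "(t::real^2)\<bullet>t = 1 \<Longrightarrow> x\<bullet>x = 1 \<Longrightarrow> y\<bullet>y = 1 \<Longrightarrow> x\<bullet>t = 0 \<Longrightarrow> y\<bullet>t = 0 \<Longrightarrow> \<bar>x\<bullet>y\<bar> = 1"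
proof -
  assume a: "t\<bullet>t = 1" "x\<bullet>x = 1" "y\<bullet>y = 1" "x\<bullet>t = 0" "y\<bullet>t = 0"
  have "x\<bullet>y = det2 t x * det2 t y" using decomp[OF a(1), of x y] a by simp
  moreover have "(det2 t x)^2 = 1" "(det2 t y)^2 = 1" using lagrange[of x t] lagrange[of y t] a by auto
  ultimately have "(x\<bullet>y)^2 = 1" by (simp add: power_mult_distrib)
  thus ?thesis using power2_eq_1_iff by fastforce
qed

lemma abs4g:
  fixes a b c d g :: real
  assumes "\<bar>a\<bar> \<le> g" "\<bar>b\<bar> \<le> 1" "\<bar>c\<bar> \<le> 1" "\<bar>d\<bar> \<le> g"
  shows "(a*b - c*d)^2 \<le> 4*g^2"
proof -
  have "\<bar>a\<bar>*\<bar>b\<bar> \<le> g*1" using assms by (intro mult_mono) auto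
  moreover have "\<bar>c\<bar>*\<bar>d\<bar> \<le> 1*g" using assms by (intro mult_mono) auto
  ultimately have "\<bar>a*b - c*d\<bar> \<le> 2*g" using abs_triangle_ineq4[of "a*b" "c*d"] by (simp add: abs_mult)
  moreover have "g \<ge> 0" using assms by linarith
  ultimately have "(a*b - c*d)^2 \<le> (2*g)^2" using abs_le_square_iff[of "a*b - c*d" "2*g"] by simp
  thus ?thesis by (simp add: power_mult_distrib)
qed

lemma Kfacts:
  assumes fs: "\<And>a. \<bar>a\<bar> \<le> 1 \<Longrightarrow> f a * a \<ge> 0"
    and fm: "\<And>a. 1/2 \<le> \<bar>a\<bar> \<Longrightarrow> \<bar>a\<bar> \<le> 1 \<Longrightarrow> \<bar>f a\<bar> \<ge> cm"
    and cm: "cm > 0" and v: "v\<bullet>v = 1" and t: "t\<bullet>t = 1" and vt: "\<bar>v\<bullet>t\<bar> \<ge> 1/2"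
    and d: "(det2 t v)^2 \<le> 4*g^2" and g: "g \<le> 1" and g0: "g \<ge> 0" and k: "(1/(1+cm^2))^k \<le> 1/64"
  shows "(mv f t ^^ k) v \<bullet> (mv f t ^^ k) v = 1" "(mv f t ^^ k) v \<bullet> t \<noteq> 0"
    "(det2 t ((mv f t ^^ k) v))^2 \<le> g^2/16"
proof -
  note it = mv_iter[OF fs fm cm v t vt, of k]
  show u: "(mv f t ^^ k) v \<bullet> (mv f t ^^ k) v = 1" using it by simp
  have "(1/(1+cm^2))^k * (det2 t v)^2 \<le> (1/64) * (4*g^2)"
    using k d by (intro mult_mono) auto
  thus dd: "(det2 t ((mv f t ^^ k) v))^2 \<le> g^2/16" using it by simp
  have "g^2 \<le> 1" using g g0 by (simp add: power_le_one)
  hence "((mv f t ^^ k) v \<bullet> t)^2 > 0" using lagrange[OF u t] dd by linarith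
  thus "(mv f t ^^ k) v \<bullet> t \<noteq> 0" by auto
qed



theorem mainTheorem8:
  fixes n :: nat and f :: "real \<Rightarrow> real"
  assumes "n \<ge> 2" and "stable f"
  shows "\<exists>K::nat. K > 0 \<and>
    (\<forall>U0. is_config n U0 \<and> eps_inactive (1/256) n U0 \<and> active n U0 \<longrightarrow>
       (\<exists>s. length s \<le> K \<and> (\<forall>ij\<in>set s. valid_intervention n ij) \<and>
            strictly_convex n (apply_interventions f U0 s)))"
proof -
  have fcont: "continuous_on {-1..1} f" and fsgn: "\<And>a. a \<in> {-1..1} \<Longrightarrow> sgn (f a) = sgn a"
    using assms(2) unfolding stable_def by auto
  have fs: "f a * a \<ge> 0" if "\<bar>a\<bar> \<le> 1" for a
  proof -
    have "sgn (f a) = sgn a" using fsgn[of a] that by (auto simp: abs_le_iff)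
    thus "f a * a \<ge> 0" by (cases "a > 0"; cases "a < 0") (auto simp: sgn_if split: if_splits intro: mult_nonpos_nonpos)
  qed
  define S where "S = {-1..-1/2} \<union> {1/2..(1::real)}"
  have Scomp: "compact S" unfolding S_def by (intro compact_Un compact_Icc)
  have Sne: "S \<noteq> {}" unfolding S_def by auto
  have Ssub: "S \<subseteq> {-1..1}" unfolding S_def by auto
  have "continuous_on S (\<lambda>a. \<bar>f a\<bar>)"
    by (intro continuous_intros continuous_on_subset[OF fcont Ssub])
  then obtain a0 where a0: "a0 \<in> S" "\<And>y. y \<in> S \<Longrightarrow> \<bar>f a0\<bar> \<le> \<bar>f y\<bar>"
    using continuous_attains_inf[OF Scomp Sne] by blast
  define cm where "cm = \<bar>f a0\<bar>"
  have "a0 \<noteq> 0" using a0(1) unfolding S_def by auto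
  moreover have "a0 \<in> {-1..1}" using a0(1) Ssub by auto
  ultimately have "sgn (f a0) \<noteq> 0" using fsgn[of a0] by (simp add: sgn_0_0)
  hence cm: "cm > 0" unfolding cm_def by auto
  have fm: "\<bar>f a\<bar> \<ge> cm" if "1/2 \<le> \<bar>a\<bar>" "\<bar>a\<bar> \<le> 1" for a
  proof -
    have "a \<in> S" using that unfolding S_def by (cases "a \<ge> 0") auto
    thus ?thesis using a0(2) cm_def by simp
  qed
  have "cm^2 > 0" using cm by simp
  hence rho1: "1/(1+cm^2) < 1" by (simp add: divide_less_eq add_pos_pos)
  obtain k where k: "(1/(1+cm^2))^k < 1/64" using real_arch_pow_inv[OF _ rho1, of "1/64"] by auto
  have kpos: "k > 0" using k by (cases k) auto
  show ?thesis
  proof (intro exI[of _ "n*k"] conjI allI impI)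
    show "n*k > 0" using assms(1) kpos by simp
    fix u assume H: "is_config n u \<and> eps_inactive (1/256) n u \<and> active n u"
    have unit: "u i \<bullet> u i = 1" if "i < n" for i
      using H that unfolding is_config_def by (metis norm_eq_1)
    have inact: "\<not> (1/256 < \<bar>u i \<bullet> u j\<bar> \<and> \<bar>u i \<bullet> u j\<bar> < 1 - 1/256)" if "i<n" "j<n" for i j
      using H that unfolding eps_inactive_def eps_active_def by blast
    obtain i1 j1 where ij1: "i1 < n" "j1 < n" "0 < \<bar>u i1 \<bullet> u j1\<bar>" "\<bar>u i1 \<bullet> u j1\<bar> < 1"
      using H unfolding active_def eps_active_def by auto
    have n0: "0 < n" using assms(1) by simp
    note u0 = unit[OF n0]
    define inA where "inA = (\<lambda>i. 1/2 \<le> \<bar>u i \<bullet> u 0\<bar>)"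
    have hA: "\<bar>u i \<bullet> u 0\<bar> \<ge> 255/256" if "i<n" "inA i" for i
      using inact[OF that(1) n0] that(2) unfolding inA_def by linarith
    have hB: "\<bar>u i \<bullet> u 0\<bar> \<le> 1/256" if "i<n" "\<not> inA i" for i
      using inact[OF that(1) n0] that(2) unfolding inA_def by linarith
    have AA: "\<bar>u i \<bullet> u j\<bar> \<ge> 1/2" if "i<n" "j<n" "inA i" "inA j" for i j
      using clusterA_real[of "u i\<bullet>u 0" "det2 (u 0) (u i)" "u j\<bullet>u 0" "det2 (u 0) (u j)"]
        decomp[OF u0, of "u i" "u j"] lagrange[OF unit[OF that(1)] u0] lagrange[OF unit[OF that(2)] u0]
        hA[OF that(1,3)] hA[OF that(2,4)] by simp
    have BB: "\<bar>u i \<bullet> u j\<bar> \<ge> 1/2" if "i<n" "j<n" "\<not> inA i" "\<not> inA j" for i j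
      using clusterB_real[of "u i\<bullet>u 0" "det2 (u 0) (u i)" "u j\<bullet>u 0" "det2 (u 0) (u j)"]
        decomp[OF u0, of "u i" "u j"] lagrange[OF unit[OF that(1)] u0] lagrange[OF unit[OF that(2)] u0]
        hB[OF that(1,3)] hB[OF that(2,4)] by simp
    have A0: "inA 0" unfolding inA_def using u0 by simp
    show "\<exists>s. length s \<le> n*k \<and> (\<forall>ij\<in>set s. valid_intervention n ij) \<and>
            strictly_convex n (apply_interventions f u s)"
    proof (cases "\<forall>i<n. inA i")
      case True
      show ?thesis
      proof (intro exI[of _ "[]"] conjI)
        show "strictly_convex n (apply_interventions f u [])"
          unfolding apply_interventions_def strictly_convex_def foldl_Nil
        proof (intro exI[of _ "\<lambda>i. sgn (u i \<bullet> u 0)"] conjI allI impI)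
          have nz: "u i \<bullet> u 0 \<noteq> 0" if "i<n" for i using hA[OF that] True that by fastforce
          show "sgn (u i \<bullet> u 0) = 1 \<or> sgn (u i \<bullet> u 0) = -1" if "i<n" for i
            using nz[OF that] by (cases "u i \<bullet> u 0 > 0") auto
          fix i j assume ij: "i<n" "j<n"
          note si = signed[OF unit[OF ij(1)] u0, of 1, OF _ nz[OF ij(1)]]
          note sj = signed[OF unit[OF ij(2)] u0, of 1, OF _ nz[OF ij(2)]]
          have di: "(det2 (u 0) (u i))^2 \<le> 1/16"
            using det_small[OF unit[OF ij(1)] u0 hA[OF ij(1)]] True ij by (simp add: power_divide)
          have dj: "(det2 (u 0) (u j))^2 \<le> 1/16"
            using det_small[OF unit[OF ij(2)] u0 hA[OF ij(2)]] True ij by (simp add: power_divide)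
          show "0 < (sgn (u i \<bullet> u 0) *\<^sub>R u i) \<bullet> (sgn (u j \<bullet> u 0) *\<^sub>R u j)"
            using within_vec[of "u 0" "sgn (u i \<bullet> u 0) *\<^sub>R u i" "sgn (u j \<bullet> u 0) *\<^sub>R u j"]
              si sj u0 di dj by simp
        qed
      qed auto
    next
      case False
      then obtain j0 where j0: "j0 < n" "\<not> inA j0" by auto
      define SS where "SS = {(i,j). i<n \<and> j<n \<and> inA i \<and> \<not> inA j}"
      define h where "h = (\<lambda>(i,j). \<bar>u i \<bullet> u j\<bar>)"
      have SSfin: "finite SS"
        by (rule finite_subset[of _ "{..<n} \<times> {..<n}"]) (auto simp: SS_def)
      have SSne: "SS \<noteq> {}" using n0 j0 A0 unfolding SS_def by blast
      have "Max (h ` SS) \<in> h ` SS" using SSfin SSne by (intro Max_in) auto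
      then obtain p q where pq: "(p,q) \<in> SS" "Max (h ` SS) = h (p,q)" by auto
      have pn: "p<n" "inA p" and qn: "q<n" "\<not> inA q" using pq(1) unfolding SS_def by auto
      define g where "g = \<bar>u p \<bullet> u q\<bar>"
      have maxp: "\<bar>u i \<bullet> u j\<bar> \<le> g" if "i<n" "j<n" "inA i" "\<not> inA j" for i j
      proof -
        have "(i,j) \<in> SS" using that unfolding SS_def by auto
        hence "h (i,j) \<le> Max (h ` SS)" using SSfin by (intro Max_ge) auto
        thus ?thesis using pq(2) unfolding h_def g_def by simp
      qed
      have g1: "g \<le> 1" unfolding g_def using unit_inner_le[OF unit[OF pn(1)] unit[OF qn(1)]] .
      have gpos: "g > 0"
      proof (rule ccontr)
        assume "\<not> g > 0"
        hence z: "u i \<bullet> u j = 0" if "i<n" "j<n" "inA i" "\<not> inA j" for i j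
          using maxp[OF that] by simp
        show False
        proof (cases "inA i1")
          case True
          show False
          proof (cases "inA j1")
            case True
            have "\<bar>u i1 \<bullet> u j1\<bar> = 1"
              using perp_both[OF unit[OF j0(1)] unit[OF ij1(1)] unit[OF ij1(2)]]
                z[OF ij1(1) j0(1) \<open>inA i1\<close> j0(2)] z[OF ij1(2) j0(1) True j0(2)] by simp
            thus False using ij1 by simp
          next
            case False
            thus False using z[OF ij1(1,2) \<open>inA i1\<close> False] ij1 by simp
          qed
        next
          case False
          show False
          proof (cases "inA j1")
            case True
            thus False using z[OF ij1(2,1) True \<open>\<not> inA i1\<close>] ij1 by (simp add: inner_commute)
          next
            case False
            have "\<bar>u i1 \<bullet> u j1\<bar> = 1"
              using perp_both[OF u0 unit[OF ij1(1)] unit[OF ij1(2)]]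
                z[OF n0 ij1(1) A0 \<open>\<not> inA i1\<close>] z[OF n0 ij1(2) A0 False] by (simp add: inner_commute)
            thus False using ij1 by simp
          qed
        qed
      qed
      define \<sigma> where "\<sigma> = sgn (u p \<bullet> u q)"
      have pqnz: "u p \<bullet> u q \<noteq> 0" using gpos g_def by auto
      have \<sigma>sq: "\<sigma> * \<sigma> = 1" unfolding \<sigma>_def using sgn_sq[OF pqnz] .
      have \<sigma>pm: "\<sigma> = 1 \<or> \<sigma> = -1" unfolding \<sigma>_def using pqnz by (cases "u p \<bullet> u q > 0") auto
      define Q where "Q = \<sigma> *\<^sub>R u q"
      have PQ: "u p \<bullet> Q = g" unfolding Q_def \<sigma>_def g_def using sgn_mul[of "u p \<bullet> u q"] by (simp add: mult.commute)
      have QQ: "Q \<bullet> Q = 1" unfolding Q_def using \<sigma>sq unit[OF qn(1)] by simp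
      have dA: "(det2 (u p) (u i))^2 \<le> 4*g^2" if "i<n" "inA i" for i
      proof -
        have "det2 (u p) (u i) = (u p \<bullet> u q) * det2 (u q) (u i) - det2 (u q) (u p) * (u q \<bullet> u i)"
          using det_tri_id[OF unit[OF qn(1)]] .
        moreover have "\<bar>u q \<bullet> u i\<bar> \<le> g" using maxp[OF that(1) qn(1) that(2) qn(2)] by (simp add: inner_commute)
        ultimately show ?thesis
          using abs4g[of "u p \<bullet> u q" g "det2 (u q) (u i)" "det2 (u q) (u p)" "u q \<bullet> u i"]
            unit_det_le[OF unit[OF qn(1)] unit[OF that(1)]] unit_det_le[OF unit[OF qn(1)] unit[OF pn(1)]]
          by (simp add: g_def)
      qed
      have dB: "(det2 (u q) (u j))^2 \<le> 4*g^2" if "j<n" "\<not> inA j" for j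
      proof -
        have "det2 (u q) (u j) = (u q \<bullet> u p) * det2 (u p) (u j) - det2 (u p) (u q) * (u p \<bullet> u j)"
          using det_tri_id[OF unit[OF pn(1)]] .
        moreover have "\<bar>u p \<bullet> u j\<bar> \<le> g" using maxp[OF pn(1) that(1) pn(2) that(2)] .
        moreover have "\<bar>u q \<bullet> u p\<bar> \<le> g" by (simp add: g_def inner_commute)
        ultimately show ?thesis
          using abs4g[of "u q \<bullet> u p" g "det2 (u p) (u j)" "det2 (u p) (u q)" "u p \<bullet> u j"]
            unit_det_le[OF unit[OF pn(1)] unit[OF that(1)]] unit_det_le[OF unit[OF pn(1)] unit[OF qn(1)]]
          by simp
      qed
      define tt where "tt = (\<lambda>i. if inA i then p else q)"
      define blk where "blk = (\<lambda>i. if i = p \<or> i = q then [] else replicate k (i, tt i))"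
      define s where "s = concat (map blk [0..<n])"
      define V where "V = (\<lambda>i. if i = p \<or> i = q then u i else (mv f (u (tt i)) ^^ k) (u i))"
      have pq_ne: "p \<noteq> q" using pn qn by auto
      have fold: "m \<le> n \<Longrightarrow> foldl (intervene f) u (concat (map blk [0..<m])) = (\<lambda>i. if i < m then V i else u i)" for m
      proof (induction m)
        case 0 then show ?case by simp
      next
        case (Suc m)
        define W where "W = (\<lambda>i. if i < m then V i else u i)"
        have IH: "foldl (intervene f) u (concat (map blk [0..<m])) = W" using Suc W_def by simp
        have "foldl (intervene f) u (concat (map blk [0..<Suc m])) = foldl (intervene f) W (blk m)"
          using IH by simp
        also have "\<dots> = (\<lambda>i. if i < Suc m then V i else u i)"
        proof (cases "m = p \<or> m = q")
          case True
          then show ?thesis by (auto simp: blk_def W_def V_def fun_eq_iff less_Suc_eq)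
        next
          case False
          have tne: "m \<noteq> tt m" using False tt_def by auto
          have Wt: "W (tt m) = u (tt m)" by (auto simp: W_def V_def tt_def)
          have "foldl (intervene f) W (blk m) = W(m := (mv f (W (tt m)) ^^ k) (W m))"
            using False fold_rep[OF tne] by (simp add: blk_def)
          also have "\<dots> = (\<lambda>i. if i < Suc m then V i else u i)"
            using False Wt by (auto simp: W_def V_def fun_eq_iff less_Suc_eq)
          finally show ?thesis .
        qed
        finally show ?case .
      qed
      have fin: "apply_interventions f u s = (\<lambda>i. if i < n then V i else u i)"
        unfolding apply_interventions_def s_def using fold[of n] by simp
      define T where "T = (\<lambda>i. if inA i then u p else u q)"
      define sg where "sg = (\<lambda>i. if inA i then 1 else \<sigma>)"
      have sgsq: "sg i * sg i = 1" for i using \<sigma>sq by (simp add: sg_def)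
      have Tu: "T i \<bullet> T i = 1" for i using unit[OF pn(1)] unit[OF qn(1)] by (simp add: T_def)
      have KF: "V i \<bullet> V i = 1 \<and> V i \<bullet> T i \<noteq> 0 \<and> (det2 (T i) (V i))^2 \<le> g^2/16" if "i<n" for i
      proof (cases "i = p \<or> i = q")
        case True
        hence "V i = T i" using pn qn by (auto simp: V_def T_def)
        thus ?thesis using Tu[of i] gpos by (simp add: det_self)
      next
        case False
        have k64: "(1/(1+cm^2))^k \<le> 1/64" using k by simp
        show ?thesis
        proof (cases "inA i")
          case True
          have "V i = (mv f (u p) ^^ k) (u i)" "T i = u p" using False True by (auto simp: V_def T_def tt_def)
          thus ?thesis using Kfacts[OF fs fm cm unit[OF that] unit[OF pn(1)] AA[OF that pn(1) True pn(2)]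
              dA[OF that True] g1 _ k64] gpos by auto
        next
          case nA: False
          have "V i = (mv f (u q) ^^ k) (u i)" "T i = u q" using False nA by (auto simp: V_def T_def tt_def)
          thus ?thesis using Kfacts[OF fs fm cm unit[OF that] unit[OF qn(1)] BB[OF that qn(1) nA qn(2)]
              dB[OF that nA] g1 _ k64] gpos by auto
        qed
      qed
      show ?thesis
      proof (intro exI[of _ s] conjI ballI)
        have "length s \<le> length [0..<n] * k"
          unfolding s_def by (rule len_concat_le) (simp add: blk_def)
        thus "length s \<le> n * k" by simp
      next
        fix ij assume "ij \<in> set s"
        then obtain i where i: "i < n" "ij \<in> set (blk i)" unfolding s_def by auto
        hence "\<not> (i = p \<or> i = q)" "ij = (i, tt i)" by (auto simp: blk_def split: if_splits)
        thus "valid_intervention n ij" using i pn qn by (auto simp: valid_intervention_def tt_def)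
      next
        show "strictly_convex n (apply_interventions f u s)"
          unfolding fin strictly_convex_def
        proof (intro exI[of _ "\<lambda>i. sg i * sgn (V i \<bullet> T i)"] conjI allI impI)
          fix i assume i: "i < n"
          show "sg i * sgn (V i \<bullet> T i) = 1 \<or> sg i * sgn (V i \<bullet> T i) = -1"
            using KF[OF i] \<sigma>pm by (cases "V i \<bullet> T i > 0") (auto simp: sg_def)
        next
          fix i j assume ij: "i < n" "j < n"
          define X where "X = (sg i * sgn (V i \<bullet> T i)) *\<^sub>R V i"
          define Y where "Y = (sg j * sgn (V j \<bullet> T j)) *\<^sub>R V j"
          note si = signed[of "V i" "T i" "sg i"] KF[OF ij(1)] Tu[of i] sgsq[of i]
          note sj = signed[of "V j" "T j" "sg j"] KF[OF ij(2)] Tu[of j] sgsq[of j]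
          have Xf: "X \<bullet> X = 1" "X \<bullet> (sg i *\<^sub>R T i) \<ge> 0" "(det2 (sg i *\<^sub>R T i) X)^2 \<le> g^2/16"
            using si unfolding X_def by auto
          have Yf: "Y \<bullet> Y = 1" "Y \<bullet> (sg j *\<^sub>R T j) \<ge> 0" "(det2 (sg j *\<^sub>R T j) Y)^2 \<le> g^2/16"
            using sj unfolding Y_def by auto
          have gg: "g^2/16 \<le> 1/16" using g1 gpos by (simp add: power_le_one)
          have STp: "inA l \<Longrightarrow> sg l *\<^sub>R T l = u p" for l by (simp add: sg_def T_def)
          have STq: "\<not> inA l \<Longrightarrow> sg l *\<^sub>R T l = Q" for l by (simp add: sg_def T_def Q_def)
          have "X \<bullet> Y > 0"
          proof (cases "inA i")
            case Ai: True
            show ?thesis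
            proof (cases "inA j")
              case True
              thus ?thesis using within_vec[OF unit[OF pn(1)] Xf(1) Yf(1)] Xf Yf STp[OF Ai] STp[OF True] gg by simp
            next
              case False
              thus ?thesis using cross_vec[OF unit[OF pn(1)] QQ Xf(1) Yf(1)] Xf Yf STp[OF Ai] STq[OF False] PQ gpos
                by simp
            qed
          next
            case Bi: False
            show ?thesis
            proof (cases "inA j")
              case True
              thus ?thesis using cross_vec[OF unit[OF pn(1)] QQ Yf(1) Xf(1)] Xf Yf STq[OF Bi] STp[OF True] PQ gpos
                by (simp add: inner_commute)
            next
              case False
              thus ?thesis using within_vec[OF QQ Xf(1) Yf(1)] Xf Yf STq[OF Bi] STq[OF False] gg by simp
            qed
          qed
          thus "0 < ((sg i * sgn (V i \<bullet> T i)) *\<^sub>R (if i < n then V i else u i)) \<bullet>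
                  ((sg j * sgn (V j \<bullet> T j)) *\<^sub>R (if j < n then V j else u j))"
            using ij unfolding X_def Y_def by simp
        qed
      qed
    qed
  qed
qed


end
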